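(* For all $\tau>0$ and all $\lambda,\lambda'\in\mathbb{R}^m_+$, $$\max_{s\in\mathcal S}\bigl\|\pi^*_{\tau,\lambda}(\cdot\mid s)-\pi^*_{\tau,\lambda'}(\cdot\mid s)\bigr\|_1\le\frac{R_{\max}}{(1-\gamma)\tau}\|\lambda-\lambda'\|_2.$$
   Context: Finite MDP with state space $\mathcal S$, action space $\mathcal A$, transition kernel $\mathrm P$, discount $\gamma\in(0,1)$, positive finite rewards $r_0,r_1,\dots,r_m:\mathcal S\times\mathcal A\to(0,\infty)$, $r_{i,\max}=\max_{s,a}r_i(s,a)$, $R_{\max}=\sqrt{\sum_{i=1}^mr_{i,\max}^2}$. For $\lambda\in\mathbb{R}^m_+$ let $r_\lambda=r_0+\sum_{i=1}^m\lambda_ir_i$. For $\tau>0$ and a stationary policy $\pi$, the entropy-regularized value is $V^\pi_{\tau,\lambda}(s)=\mathbb{E}[\sum_{t\ge0}\gamma^t(r_\lambda(s_t,a_t)-\tau\log\pi(a_t\mid s_t))\mid s_0=s]$ with $a_t\sim\pi(\cdot\mid s_t)$, $s_{t+1}\sim\mathrm P(\cdot\mid s_t,a_t)$. There is a unique stationary policy maximizing $V^\pi_{\tau,\lambda}(s)$ simultaneously for all $s\in\mathcal S$; it is denoted $\pi^*_{\tau,\lambda}$ (the optimal policy of the entropy-regularized MDP with reward $r_\lambda$). *)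

theory Defs
  imports "HOL-Analysis.Analysis"
begin

text \<open>Finite MDP: states 's, actions 'a (finite types). A stationary policy is a
  map p :: 's => 'a => real with p s a = p(a|s). Transition kernel
  P s a s' = P(s'|s,a). Rewards r 0, ..., r m.\<close>

definition is_policy :: "('s::finite \<Rightarrow> 'a::finite \<Rightarrow> real) \<Rightarrow> bool" where
  "is_policy p \<longleftrightarrow> (\<forall>s. (\<forall>a. 0 \<le> p s a) \<and> (\<Sum>a\<in>UNIV. p s a) = 1)"

definition is_kernel :: "('s::finite \<Rightarrow> 'a::finite \<Rightarrow> 's \<Rightarrow> real) \<Rightarrow> bool" where
  "is_kernel P \<longleftrightarrow> (\<forall>s a. (\<forall>s'. 0 \<le> P s a s') \<and> (\<Sum>s'\<in>UNIV. P s a s') = 1)"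

definition r_lam :: "nat \<Rightarrow> (nat \<Rightarrow> 's \<Rightarrow> 'a \<Rightarrow> real) \<Rightarrow> (nat \<Rightarrow> real) \<Rightarrow> 's \<Rightarrow> 'a \<Rightarrow> real" where
  "r_lam m r lam s a = r 0 s a + (\<Sum>i=1..m. lam i * r i s a)"

definition P_pi :: "('s::finite \<Rightarrow> 'a::finite \<Rightarrow> 's \<Rightarrow> real) \<Rightarrow> ('s \<Rightarrow> 'a \<Rightarrow> real) \<Rightarrow> 's \<Rightarrow> 's \<Rightarrow> real" where
  "P_pi P p s s' = (\<Sum>a\<in>UNIV. p s a * P s a s')"

fun state_dist :: "('s::finite \<Rightarrow> 'a::finite \<Rightarrow> 's \<Rightarrow> real) \<Rightarrow> ('s \<Rightarrow> 'a \<Rightarrow> real) \<Rightarrow> nat \<Rightarrow> 's \<Rightarrow> 's \<Rightarrow> real" where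
  "state_dist P p 0 s s' = (if s = s' then 1 else 0)"
| "state_dist P p (Suc n) s s' = (\<Sum>s''\<in>UNIV. state_dist P p n s s'' * P_pi P p s'' s')"

text \<open>expected one-step regularized reward E_{a~p(.|s)}[r_lambda(s,a) - tau log p(a|s)]
  (terms with p(a|s) = 0 contribute 0)\<close>
definition reg_reward :: "nat \<Rightarrow> (nat \<Rightarrow> 's \<Rightarrow> 'a::finite \<Rightarrow> real) \<Rightarrow> (nat \<Rightarrow> real) \<Rightarrow> real
    \<Rightarrow> ('s \<Rightarrow> 'a \<Rightarrow> real) \<Rightarrow> 's \<Rightarrow> real" where
  "reg_reward m r lam tau p s = (\<Sum>a\<in>UNIV. p s a * (r_lam m r lam s a - tau * ln (p s a)))"

definition V_reg :: "('s::finite \<Rightarrow> 'a::finite \<Rightarrow> 's \<Rightarrow> real) \<Rightarrow> real \<Rightarrow> nat \<Rightarrow> (nat \<Rightarrow> 's \<Rightarrow> 'a \<Rightarrow> real)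
    \<Rightarrow> real \<Rightarrow> (nat \<Rightarrow> real) \<Rightarrow> ('s \<Rightarrow> 'a \<Rightarrow> real) \<Rightarrow> 's \<Rightarrow> real" where
  "V_reg P gamma m r tau lam p s =
     (\<Sum>t. gamma ^ t * (\<Sum>s'\<in>UNIV. state_dist P p t s s' * reg_reward m r lam tau p s'))"

definition is_opt_reg_policy :: "('s::finite \<Rightarrow> 'a::finite \<Rightarrow> 's \<Rightarrow> real) \<Rightarrow> real \<Rightarrow> nat
    \<Rightarrow> (nat \<Rightarrow> 's \<Rightarrow> 'a \<Rightarrow> real) \<Rightarrow> real \<Rightarrow> (nat \<Rightarrow> real) \<Rightarrow> ('s \<Rightarrow> 'a \<Rightarrow> real) \<Rightarrow> bool" where
  "is_opt_reg_policy P gamma m r tau lam p \<longleftrightarrow>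
     is_policy p \<and> (\<forall>q. is_policy q \<longrightarrow> (\<forall>s. V_reg P gamma m r tau lam q s \<le> V_reg P gamma m r tau lam p s))"

definition r_max :: "(nat \<Rightarrow> 's::finite \<Rightarrow> 'a::finite \<Rightarrow> real) \<Rightarrow> nat \<Rightarrow> real" where
  "r_max r i = Max (range (\<lambda>(s, a). r i s a))"

definition R_max :: "nat \<Rightarrow> (nat \<Rightarrow> 's::finite \<Rightarrow> 'a::finite \<Rightarrow> real) \<Rightarrow> real" where
  "R_max m r = sqrt (\<Sum>i=1..m. (r_max r i)\<^sup>2)"

definition lam_dist2 :: "nat \<Rightarrow> (nat \<Rightarrow> real) \<Rightarrow> (nat \<Rightarrow> real) \<Rightarrow> real" where
  "lam_dist2 m lam lam' = sqrt (\<Sum>i=1..m. (lam i - lam' i)\<^sup>2)"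

end

theory Submission
  imports Defs "HOL-Analysis.Analysis"
begin

lemma ln_strict: assumes "0 < (x::real)" "x \<noteq> 1" shows "ln x < x - 1"
proof -
  have s: "0 < sqrt x" using assms by simp
  have "ln x = 2 * ln (sqrt x)" using assms by (simp add: ln_sqrt)
  also have "\<dots> \<le> 2 * (sqrt x - 1)" using ln_le_minus_one[OF s] by simp
  also have "\<dots> < x - 1"
  proof -
    have "sqrt x \<noteq> 1" using assms by auto
    then have "0 < (sqrt x - 1)^2" by simp
    also have "(sqrt x - 1)^2 = x - 2 * sqrt x + 1" using assms by (simp add: power2_diff)
    finally show ?thesis by simp
  qed
  finally show ?thesis .
qed

lemma mad_bound:
  fixes p v :: "'a::finite \<Rightarrow> real"
  assumes p0: "\<And>a. 0 \<le> p a" and p1: "(\<Sum>a\<in>UNIV. p a) = 1" and vb: "\<And>a. \<bar>v a\<bar> \<le> d"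
  shows "(\<Sum>a\<in>UNIV. p a * \<bar>v a - (\<Sum>b\<in>UNIV. p b * v b)\<bar>) \<le> d"
proof -
  define c where "c = (\<Sum>b\<in>UNIV. p b * v b)"
  define w where "w a = \<bar>v a - c\<bar>" for a
  define mm where "mm = (\<Sum>a\<in>UNIV. p a * w a)"
  have d0: "0 \<le> d" using vb[of undefined] by simp
  have m0: "0 \<le> mm" unfolding mm_def w_def by (intro sum_nonneg mult_nonneg_nonneg p0) auto
  have "0 \<le> (\<Sum>a\<in>UNIV. p a * (w a - mm)^2)" by (intro sum_nonneg mult_nonneg_nonneg p0) auto
  also have "\<dots> = (\<Sum>a\<in>UNIV. p a * (w a)^2 - 2 * mm * (p a * w a) + mm^2 * p a)"
    by (rule sum.cong) (auto simp: power2_eq_square algebra_simps)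
  also have "\<dots> = (\<Sum>a\<in>UNIV. p a * (w a)^2) - 2 * mm * mm + mm^2"
    by (simp add: sum.distrib sum_subtractf sum_distrib_left[symmetric] p1 mm_def)
  finally have A: "mm^2 \<le> (\<Sum>a\<in>UNIV. p a * (w a)^2)" by (simp add: power2_eq_square)
  have "(\<Sum>a\<in>UNIV. p a * (w a)^2) = (\<Sum>a\<in>UNIV. p a * (v a)^2 - 2 * c * (p a * v a) + c^2 * p a)"
    by (rule sum.cong) (auto simp: w_def power2_eq_square algebra_simps)
  also have "\<dots> = (\<Sum>a\<in>UNIV. p a * (v a)^2) - 2 * c * c + c^2"
    by (simp add: sum.distrib sum_subtractf sum_distrib_left[symmetric] p1 c_def)
  also have "\<dots> \<le> (\<Sum>a\<in>UNIV. p a * (v a)^2)" by (simp add: power2_eq_square)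
  also have "\<dots> \<le> (\<Sum>a\<in>UNIV. p a * d^2)"
  proof (intro sum_mono mult_left_mono p0)
    fix a show "(v a)^2 \<le> d^2" using vb[of a] d0 by (simp add: abs_le_square_iff[symmetric])
  qed
  also have "\<dots> = d^2" by (simp add: sum_distrib_right[symmetric] p1)
  finally have "mm^2 \<le> d^2" using A by simp
  then have "mm \<le> d" using m0 d0 by (simp add: power2_le_iff_abs_le)
  then show ?thesis unfolding mm_def w_def c_def .
qed

definition sm :: "('a::finite \<Rightarrow> real) \<Rightarrow> 'a \<Rightarrow> real" where
  "sm x a = exp (x a) / (\<Sum>b\<in>UNIV. exp (x b))"

lemma sm_pos: "0 < sm x a"
  unfolding sm_def by (intro divide_pos_pos) (auto intro!: sum_pos)

lemma sm_sum: "(\<Sum>a\<in>UNIV. sm x a) = 1"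
proof -
  have "(\<Sum>b\<in>UNIV. exp (x b)) > 0" by (auto intro!: sum_pos)
  then show ?thesis unfolding sm_def by (simp add: sum_divide_distrib[symmetric])
qed

lemma sm_deriv:
  fixes x v :: "'a::finite \<Rightarrow> real"
  shows "((\<lambda>t. sm (\<lambda>b. x b + t * v b) a) has_real_derivative
     (sm (\<lambda>b. x b + t * v b) a * (v a - (\<Sum>b\<in>UNIV. sm (\<lambda>b. x b + t * v b) b * v b)))) (at t)"
proof -
  define Z where "Z t = (\<Sum>b\<in>UNIV. exp (x b + t * v b))" for t
  have Zp: "0 < Z t" for t unfolding Z_def by (auto intro!: sum_pos)
  have smZ: "sm (\<lambda>b. x b + t * v b) c = exp (x c + t * v c) / Z t" for c t
    unfolding sm_def Z_def by simp
  have dZ: "(Z has_real_derivative (\<Sum>b\<in>UNIV. exp (x b + t * v b) * v b)) (at t)"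
    unfolding Z_def by (auto intro!: derivative_eq_intros)
  have dE: "((\<lambda>t. exp (x a + t * v a)) has_real_derivative exp (x a + t * v a) * v a) (at t)"
    by (auto intro!: derivative_eq_intros)
  have "((\<lambda>t. exp (x a + t * v a) / Z t) has_real_derivative
     (exp (x a + t * v a) * v a * Z t - (\<Sum>b\<in>UNIV. exp (x b + t * v b) * v b) * exp (x a + t * v a)) / (Z t * Z t)) (at t)"
    using DERIV_divide[OF dE dZ] Zp[of t] by (simp add: algebra_simps)
  moreover have "(exp (x a + t * v a) * v a * Z t - (\<Sum>b\<in>UNIV. exp (x b + t * v b) * v b) * exp (x a + t * v a)) / (Z t * Z t)
     = sm (\<lambda>b. x b + t * v b) a * (v a - (\<Sum>b\<in>UNIV. sm (\<lambda>b. x b + t * v b) b * v b))"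
  proof -
    have "(\<Sum>b\<in>UNIV. sm (\<lambda>b. x b + t * v b) b * v b) = (\<Sum>b\<in>UNIV. exp (x b + t * v b) * v b) / Z t"
      by (simp add: smZ sum_divide_distrib)
    then show ?thesis using Zp[of t] by (simp add: smZ field_simps)
  qed
  ultimately show ?thesis by (simp add: smZ)
qed

lemma sm_lip:
  fixes x y :: "'a::finite \<Rightarrow> real"
  assumes xy: "\<And>a. \<bar>x a - y a\<bar> \<le> d"
  shows "(\<Sum>a\<in>UNIV. \<bar>sm x a - sm y a\<bar>) \<le> d"
proof -
  define v where "v b = y b - x b" for b
  define sg where "sg a = sgn (sm y a - sm x a)" for a
  define xt where "xt t = (\<lambda>b. x b + t * v b)" for t :: real
  define h where "h t = (\<Sum>a\<in>UNIV. sg a * sm (xt t) a)" for t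
  define h' where "h' t = (\<Sum>a\<in>UNIV. sg a * (sm (xt t) a * (v a - (\<Sum>b\<in>UNIV. sm (xt t) b * v b))))" for t
  have "DERIV h t :> h' t" for t
    unfolding h_def h'_def xt_def
    by (intro DERIV_sum DERIV_cmult sm_deriv)
  then obtain z where z: "h 1 - h 0 = (1 - 0) * h' z" using MVT2[of 0 1 h h'] by auto
  have x1: "xt 1 = y" "xt 0 = x" unfolding xt_def v_def by auto
  have "h 1 - h 0 = (\<Sum>a\<in>UNIV. sg a * (sm y a - sm x a))"
    unfolding h_def x1 by (simp add: sum_subtractf algebra_simps)
  also have "\<dots> = (\<Sum>a\<in>UNIV. \<bar>sm x a - sm y a\<bar>)"
  proof -
    have aux: "sgn u * u = \<bar>u\<bar>" for u :: real by (auto simp: sgn_if)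
    show ?thesis unfolding sg_def by (rule sum.cong) (auto simp: aux abs_minus_commute)
  qed
  finally have E: "(\<Sum>a\<in>UNIV. \<bar>sm x a - sm y a\<bar>) = h' z" using z by simp
  have "h' z \<le> (\<Sum>a\<in>UNIV. sm (xt z) a * \<bar>v a - (\<Sum>b\<in>UNIV. sm (xt z) b * v b)\<bar>)"
    unfolding h'_def
  proof (rule sum_mono)
    fix a
    let ?w = "v a - (\<Sum>b\<in>UNIV. sm (xt z) b * v b)"
    have "sg a * (sm (xt z) a * ?w) \<le> \<bar>sg a * (sm (xt z) a * ?w)\<bar>" by simp
    also have "\<dots> = \<bar>sg a\<bar> * (sm (xt z) a * \<bar>?w\<bar>)" using sm_pos[of "xt z" a] by (simp add: abs_mult)
    also have "\<dots> \<le> 1 * (sm (xt z) a * \<bar>?w\<bar>)"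
      by (intro mult_right_mono) (auto simp: sg_def abs_sgn_eq less_imp_le[OF sm_pos])
    finally show "sg a * (sm (xt z) a * ?w) \<le> sm (xt z) a * \<bar>?w\<bar>" by simp
  qed
  also have "\<dots> \<le> d"
    by (rule mad_bound) (auto simp: less_imp_le[OF sm_pos] sm_sum v_def abs_minus_commute xy)
  finally show ?thesis using E by simp
qed

lemma gibbs:
  fixes Qv u :: "'a::finite \<Rightarrow> real"
  assumes tau: "0 < tau" and u0: "\<And>a. 0 \<le> u a" and u1: "(\<Sum>a\<in>UNIV. u a) = 1"
    and mx: "\<And>w. (\<And>a. 0 \<le> w a) \<Longrightarrow> (\<Sum>a\<in>UNIV. w a) = 1 \<Longrightarrow>
        (\<Sum>a\<in>UNIV. w a * (Qv a - tau * ln (w a))) \<le> (\<Sum>a\<in>UNIV. u a * (Qv a - tau * ln (u a)))"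
  shows "u a = sm (\<lambda>b. Qv b / tau) a"
proof -
  define g where "g = sm (\<lambda>b. Qv b / tau)"
  define Z where "Z = (\<Sum>b\<in>UNIV. exp (Qv b / tau))"
  have Zp: "0 < Z" unfolding Z_def by (auto intro!: sum_pos)
  have gp: "0 < g c" for c unfolding g_def by (rule sm_pos)
  have g1: "(\<Sum>c\<in>UNIV. g c) = 1" unfolding g_def by (rule sm_sum)
  have lng: "ln (g c) = Qv c / tau - ln Z" for c
    unfolding g_def sm_def Z_def[symmetric] using Zp by (simp add: ln_div)
  have Qe: "Qv c = tau * (ln (g c) + ln Z)" for c using lng[of c] tau by simp
  define sl where "sl w c = (if w c = 0 then g c else w c * (g c / w c - 1 - ln (g c / w c)))" for w c
  have slnn: "0 \<le> sl w c" if "0 \<le> w c" for w c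
  proof (cases "w c = 0")
    case True then show ?thesis using gp[of c] by (simp add: sl_def)
  next
    case False
    then have "0 < g c / w c" using that gp[of c] by simp
    from ln_le_minus_one[OF this] show ?thesis using False that by (simp add: sl_def)
  qed
  have trm: "w c * (Qv c - tau * ln (w c)) + tau * sl w c = tau * (g c - w c) + w c * (tau * ln Z)"
    if "0 \<le> w c" for w c
  proof (cases "w c = 0")
    case True then show ?thesis by (simp add: sl_def)
  next
    case False
    then have wp: "0 < w c" using that by simp
    have L: "ln (g c / w c) = ln (g c) - ln (w c)" using wp gp[of c] by (simp add: ln_div)
    have "w c * (g c / w c) = g c" using False by simp
    then show ?thesis using False wp unfolding sl_def Qe[of c] L by (simp add: algebra_simps)
  qed
  have Fsum: "(\<Sum>c\<in>UNIV. w c * (Qv c - tau * ln (w c))) + tau * (\<Sum>c\<in>UNIV. sl w c) = tau * ln Z"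
    if "\<And>c. 0 \<le> w c" "(\<Sum>c\<in>UNIV. w c) = 1" for w
  proof -
    have "(\<Sum>c\<in>UNIV. w c * (Qv c - tau * ln (w c))) + tau * (\<Sum>c\<in>UNIV. sl w c)
        = (\<Sum>c\<in>UNIV. w c * (Qv c - tau * ln (w c)) + tau * sl w c)"
      by (simp add: sum.distrib sum_distrib_left)
    also have "\<dots> = (\<Sum>c\<in>UNIV. tau * (g c - w c) + w c * (tau * ln Z))"
      using trm that(1) by (intro sum.cong) auto
    also have "\<dots> = tau * ln Z"
      by (simp add: sum.distrib sum_distrib_left[symmetric] sum_distrib_right[symmetric] sum_subtractf g1 that(2))
    finally show ?thesis .
  qed
  have slg: "sl g c = 0" for c using gp[of c] by (simp add: sl_def)
  have Fg: "(\<Sum>c\<in>UNIV. g c * (Qv c - tau * ln (g c))) = tau * ln Z"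
    using Fsum[of g] gp g1 slg by (simp add: less_imp_le)
  have "(\<Sum>c\<in>UNIV. g c * (Qv c - tau * ln (g c))) \<le> (\<Sum>a\<in>UNIV. u a * (Qv a - tau * ln (u a)))"
    by (rule mx) (auto simp: g1 less_imp_le[OF gp])
  with Fg Fsum[of u, OF u0 u1] have "tau * (\<Sum>c\<in>UNIV. sl u c) \<le> 0" by simp
  with tau have "(\<Sum>c\<in>UNIV. sl u c) \<le> 0" by (simp add: mult_le_0_iff)
  moreover have "\<forall>c\<in>UNIV. 0 \<le> sl u c" using slnn u0 by auto
  ultimately have "(\<Sum>c\<in>UNIV. sl u c) = 0" by (meson antisym sum_nonneg)
  then have s0: "sl u a = 0" using slnn u0 by (simp add: sum_nonneg_eq_0_iff)
  have un: "u a \<noteq> 0"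
  proof
    assume "u a = 0" then show False using s0 gp[of a] by (simp add: sl_def)
  qed
  then have up: "0 < u a" using u0[of a] by simp
  have "g a / u a - 1 - ln (g a / u a) = 0" using s0 un by (simp add: sl_def)
  moreover have "0 < g a / u a" using up gp[of a] by simp
  ultimately have "g a / u a = 1" using ln_strict[of "g a / u a"] by fastforce
  then show ?thesis using un unfolding g_def by simp
qed

lemma delta_sum1: "(\<Sum>u\<in>UNIV. (if s = u then 1 else 0) * (X u::real)) = X (s::'s::finite)"
proof -
  have "(\<Sum>u\<in>UNIV. (if s = u then 1 else 0) * X u) = (\<Sum>u\<in>UNIV. if s = u then X u else 0)"
    by (rule sum.cong) auto
  also have "\<dots> = X s" by simp
  finally show ?thesis .
qed

lemma delta_sum2: "(\<Sum>u\<in>UNIV. (X u::real) * (if u = s then 1 else 0)) = X (s::'s::finite)"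
proof -
  have "(\<Sum>u\<in>UNIV. X u * (if u = s then 1 else 0)) = (\<Sum>u\<in>UNIV. if u = s then X u else 0)"
    by (rule sum.cong) auto
  also have "\<dots> = X s" by simp
  finally show ?thesis .
qed

lemma P_pi_nonneg: "is_kernel P \<Longrightarrow> is_policy p \<Longrightarrow> 0 \<le> P_pi P p s s'"
  unfolding P_pi_def is_kernel_def is_policy_def by (auto intro!: sum_nonneg)

lemma P_pi_sum: assumes "is_kernel P" "is_policy p" shows "(\<Sum>s'\<in>UNIV. P_pi P p s s') = 1"
proof -
  have "(\<Sum>s'\<in>UNIV. P_pi P p s s') = (\<Sum>a\<in>UNIV. p s a * (\<Sum>s'\<in>UNIV. P s a s'))"
    unfolding P_pi_def sum_distrib_left by (rule sum.swap)
  also have "\<dots> = 1" using assms unfolding is_kernel_def is_policy_def by simp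
  finally show ?thesis .
qed

lemma sd_nonneg: "is_kernel P \<Longrightarrow> is_policy p \<Longrightarrow> 0 \<le> state_dist P p n s s'"
  by (induction n arbitrary: s') (auto intro!: sum_nonneg mult_nonneg_nonneg P_pi_nonneg)

lemma sd_sum: assumes "is_kernel P" "is_policy p" shows "(\<Sum>s'\<in>UNIV. state_dist P p n s s') = 1"
proof (induction n)
  case 0 then show ?case by simp
next
  case (Suc n)
  have "(\<Sum>s'\<in>UNIV. state_dist P p (Suc n) s s') = (\<Sum>u\<in>UNIV. state_dist P p n s u * (\<Sum>s'\<in>UNIV. P_pi P p u s'))"
    unfolding state_dist.simps sum_distrib_left mult.assoc by (rule sum.swap)
  also have "\<dots> = 1" using P_pi_sum[OF assms] Suc by simp
  finally show ?case .
qed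

lemma sd_le1: assumes "is_kernel P" "is_policy p" shows "state_dist P p n s s' \<le> 1"
proof -
  have "state_dist P p n s s' \<le> (\<Sum>u\<in>UNIV. state_dist P p n s u)"
    by (rule member_le_sum) (auto simp: sd_nonneg[OF assms])
  then show ?thesis using sd_sum[OF assms] by simp
qed

lemma sd_Suc_left: "state_dist P p (Suc n) s s' = (\<Sum>u\<in>UNIV. P_pi P p s u * state_dist P p n u s')"
proof (induction n arbitrary: s')
  case 0
  have "(\<Sum>u\<in>UNIV. (if s = u then 1 else 0) * P_pi P p u s') = P_pi P p s s'"
    by (rule delta_sum1)
  moreover have "(\<Sum>u\<in>UNIV. P_pi P p s u * (if u = s' then 1 else 0)) = P_pi P p s s'"
    by (rule delta_sum2)
  ultimately show ?case by simp
next
  case (Suc n)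
  have "state_dist P p (Suc (Suc n)) s s' = (\<Sum>s''\<in>UNIV. (\<Sum>u\<in>UNIV. P_pi P p s u * state_dist P p n u s'') * P_pi P p s'' s')"
    by (simp only: state_dist.simps(2)[of P p "Suc n"] Suc)
  also have "\<dots> = (\<Sum>u\<in>UNIV. P_pi P p s u * (\<Sum>s''\<in>UNIV. state_dist P p n u s'' * P_pi P p s'' s'))"
    unfolding sum_distrib_left sum_distrib_right mult.assoc by (rule sum.swap)
  also have "\<dots> = (\<Sum>u\<in>UNIV. P_pi P p s u * state_dist P p (Suc n) u s')" by simp
  finally show ?case .
qed

lemma comparison:
  fixes D e :: "'s::finite \<Rightarrow> real" and M :: "'s \<Rightarrow> 's \<Rightarrow> real"
  assumes M0: "\<And>s s'. 0 \<le> M s s'" and M1: "\<And>s. (\<Sum>s'\<in>UNIV. M s s') = 1"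
    and g0: "0 \<le> gamma" and g1: "gamma < 1"
    and e0: "\<And>s. 0 \<le> e s" and De: "\<And>s. e s + gamma * (\<Sum>s'\<in>UNIV. M s s' * D s') \<le> D s"
  shows "e s \<le> D s"
proof -
  define mu where "mu = Min (range D)"
  have mu: "mu \<le> D s'" for s' unfolding mu_def by simp
  have Mmu: "mu \<le> (\<Sum>s'\<in>UNIV. M s s' * D s')" for s
  proof -
    have "mu = (\<Sum>s'\<in>UNIV. M s s' * mu)" by (simp add: sum_distrib_right[symmetric] M1)
    also have "\<dots> \<le> (\<Sum>s'\<in>UNIV. M s s' * D s')" by (intro sum_mono mult_left_mono mu M0)
    finally show ?thesis .
  qed
  have gD: "gamma * mu \<le> D s'" for s'
    using De[of s'] e0[of s'] mult_left_mono[OF Mmu[of s'] g0] by linarith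
  have "mu \<in> range D" unfolding mu_def by (rule Min_in) auto
  then obtain s0 where s0: "D s0 = mu" by auto
  have "gamma * mu \<le> mu" using gD[of s0] s0 by simp
  then have "0 \<le> (1 - gamma) * mu" by (simp add: algebra_simps)
  then have mu0: "0 \<le> mu" using g1 by (simp add: zero_le_mult_iff)
  show ?thesis using De[of s] mult_nonneg_nonneg[OF g0 order_trans[OF mu0 Mmu[of s]]] by linarith
qed

lemma V_sums:
  assumes K: "is_kernel P" and pol: "is_policy p" and g0: "0 \<le> gamma" and g1: "gamma < 1"
  shows "(\<lambda>t. gamma ^ t * (\<Sum>s'\<in>UNIV. state_dist P p t s s' * reg_reward m r lam tau p s'))
           sums V_reg P gamma m r tau lam p s"
proof -
  let ?g = "reg_reward m r lam tau p"
  define B where "B = (\<Sum>s'\<in>UNIV. \<bar>?g s'\<bar>)"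
  have "summable (\<lambda>t. gamma ^ t * B)" using g0 g1 by (intro summable_mult2 summable_geometric) simp
  moreover have "norm (gamma ^ t * (\<Sum>s'\<in>UNIV. state_dist P p t s s' * ?g s')) \<le> gamma ^ t * B" for t
  proof -
    have "\<bar>\<Sum>s'\<in>UNIV. state_dist P p t s s' * ?g s'\<bar> \<le> (\<Sum>s'\<in>UNIV. \<bar>state_dist P p t s s' * ?g s'\<bar>)"
      by (rule sum_abs)
    also have "\<dots> \<le> B" unfolding B_def
    proof (rule sum_mono)
      fix s' show "\<bar>state_dist P p t s s' * ?g s'\<bar> \<le> \<bar>?g s'\<bar>"
        using sd_nonneg[OF K pol, of t s s'] sd_le1[OF K pol, of t s s']
        by (simp add: abs_mult mult_left_le_one_le)
    qed
    finally show ?thesis using g0 by (simp add: abs_mult mult_left_mono)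
  qed
  ultimately have "summable (\<lambda>t. gamma ^ t * (\<Sum>s'\<in>UNIV. state_dist P p t s s' * ?g s'))"
    by (rule summable_comparison_test'[where N=0])
  then show ?thesis unfolding V_reg_def by (rule summable_sums)
qed

lemma bellman:
  assumes K: "is_kernel P" and pol: "is_policy p" and g0: "0 \<le> gamma" and g1: "gamma < 1"
  shows "V_reg P gamma m r tau lam p s = reg_reward m r lam tau p s
     + gamma * (\<Sum>u\<in>UNIV. P_pi P p s u * V_reg P gamma m r tau lam p u)"
proof -
  let ?g = "reg_reward m r lam tau p"
  let ?V = "V_reg P gamma m r tau lam p"
  define f where "f u t = gamma ^ t * (\<Sum>s'\<in>UNIV. state_dist P p t u s' * ?g s')" for u t
  have fs: "f u sums ?V u" for u unfolding f_def by (rule V_sums[OF assms])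
  have "(\<lambda>t. gamma * (\<Sum>u\<in>UNIV. P_pi P p s u * f u t)) sums (gamma * (\<Sum>u\<in>UNIV. P_pi P p s u * ?V u))"
    by (intro sums_mult sums_sum fs)
  moreover have "gamma * (\<Sum>u\<in>UNIV. P_pi P p s u * f u t) = f s (Suc t)" for t
  proof -
    have "f s (Suc t) = gamma * (gamma ^ t * (\<Sum>s'\<in>UNIV. (\<Sum>u\<in>UNIV. P_pi P p s u * state_dist P p t u s') * ?g s'))"
      unfolding f_def sd_Suc_left by simp
    also have "(\<Sum>s'\<in>UNIV. (\<Sum>u\<in>UNIV. P_pi P p s u * state_dist P p t u s') * ?g s')
        = (\<Sum>u\<in>UNIV. P_pi P p s u * (\<Sum>s'\<in>UNIV. state_dist P p t u s' * ?g s'))"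
      unfolding sum_distrib_left sum_distrib_right mult.assoc by (rule sum.swap)
    also have "gamma * (gamma ^ t * (\<Sum>u\<in>UNIV. P_pi P p s u * (\<Sum>s'\<in>UNIV. state_dist P p t u s' * ?g s')))
        = gamma * (\<Sum>u\<in>UNIV. P_pi P p s u * f u t)"
      unfolding f_def by (simp add: sum_distrib_left mult.left_commute)
    finally show ?thesis by simp
  qed
  ultimately have "(\<lambda>t. f s (Suc t)) sums (gamma * (\<Sum>u\<in>UNIV. P_pi P p s u * ?V u))" by simp
  then have "f s sums (gamma * (\<Sum>u\<in>UNIV. P_pi P p s u * ?V u) + f s 0)" by (simp add: sums_Suc_iff)
  moreover have "f s 0 = ?g s" unfolding f_def by (simp add: delta_sum1)
  ultimately show ?thesis using sums_unique2[OF fs] by simp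
qed

lemma Tq_eq:
  "reg_reward m r lam tau q s + gamma * (\<Sum>u\<in>UNIV. P_pi P q s u * V u)
   = (\<Sum>a\<in>UNIV. q s a * ((r_lam m r lam s a + gamma * (\<Sum>u\<in>UNIV. P s a u * V u)) - tau * ln (q s a)))"
proof -
  have "(\<Sum>u\<in>UNIV. P_pi P q s u * V u) = (\<Sum>a\<in>UNIV. q s a * (\<Sum>u\<in>UNIV. P s a u * V u))"
    unfolding P_pi_def sum_distrib_left sum_distrib_right mult.assoc by (rule sum.swap)
  then show ?thesis unfolding reg_reward_def
    by (simp add: sum_distrib_left sum.distrib[symmetric] algebra_simps)
qed

lemma onestep:
  fixes P :: "'s::finite \<Rightarrow> 'a::finite \<Rightarrow> 's \<Rightarrow> real"
  assumes K: "is_kernel P" and g0: "0 \<le> gamma" and g1: "gamma < 1"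
    and opt: "is_opt_reg_policy P gamma m r tau lam p"
    and w0: "\<And>a. 0 \<le> w a" and w1: "(\<Sum>a\<in>UNIV. w a) = 1"
  shows "(\<Sum>a\<in>UNIV. w a * ((r_lam m r lam s a + gamma * (\<Sum>u\<in>UNIV. P s a u * V_reg P gamma m r tau lam p u)) - tau * ln (w a)))
       \<le> (\<Sum>a\<in>UNIV. p s a * ((r_lam m r lam s a + gamma * (\<Sum>u\<in>UNIV. P s a u * V_reg P gamma m r tau lam p u)) - tau * ln (p s a)))"
    (is "?Fw \<le> ?Fp")
proof (rule ccontr)
  assume neg: "\<not> ?Fw \<le> ?Fp"
  let ?V = "V_reg P gamma m r tau lam p"
  have pol: "is_policy p" using opt unfolding is_opt_reg_policy_def by simp
  define q where "q = p(s := w)"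
  have qpol: "is_policy q" using pol w0 w1 unfolding q_def is_policy_def by auto
  let ?W = "V_reg P gamma m r tau lam q"
  define T where "T s' = reg_reward m r lam tau q s' + gamma * (\<Sum>u\<in>UNIV. P_pi P q s' u * ?V u)" for s'
  define e where "e s' = T s' - ?V s'" for s'
  have Vp: "?V s' = reg_reward m r lam tau p s' + gamma * (\<Sum>u\<in>UNIV. P_pi P p s' u * ?V u)" for s'
    by (rule bellman[OF K pol g0 g1])
  have e_other: "e s' = 0" if "s' \<noteq> s" for s'
  proof -
    have "reg_reward m r lam tau q s' = reg_reward m r lam tau p s'"
      unfolding reg_reward_def q_def using that by simp
    moreover have "P_pi P q s' u = P_pi P p s' u" for u unfolding P_pi_def q_def using that by simp
    ultimately show ?thesis unfolding e_def T_def using Vp[of s'] by simp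
  qed
  have e_s: "e s = ?Fw - ?Fp"
  proof -
    have "T s = ?Fw" unfolding T_def Tq_eq q_def by simp
    moreover have "?V s = ?Fp" using Vp[of s] unfolding Tq_eq .
    ultimately show ?thesis unfolding e_def by simp
  qed
  have e0: "0 \<le> e s'" for s' using e_s e_other neg by (cases "s' = s") auto
  have Dineq: "e s' + gamma * (\<Sum>u\<in>UNIV. P_pi P q s' u * (?W u - ?V u)) \<le> ?W s' - ?V s'" for s'
  proof -
    have Wb: "?W s' = reg_reward m r lam tau q s' + gamma * (\<Sum>u\<in>UNIV. P_pi P q s' u * ?W u)"
      by (rule bellman[OF K qpol g0 g1])
    have S:  "(\<Sum>u\<in>UNIV. P_pi P q s' u * (?W u - ?V u))
        = (\<Sum>u\<in>UNIV. P_pi P q s' u * ?W u) - (\<Sum>u\<in>UNIV. P_pi P q s' u * ?V u)"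
      by (simp add: sum_subtractf right_diff_distrib)
    have ar: "Wv = R + g * A \<Longrightarrow> Ev = R + g * B - X \<Longrightarrow> Ev + g * (A - B) \<le> Wv - X"
      for Wv R g A Ev B X :: real by (simp add: right_diff_distrib)
    have E1: "e s' = reg_reward m r lam tau q s' + gamma * (\<Sum>u\<in>UNIV. P_pi P q s' u * ?V u) - ?V s'"
      by (simp only: e_def T_def)
    show ?thesis unfolding S using ar[OF Wb E1] .
  qed
  have "e s \<le> ?W s - ?V s"
    by (rule comparison[where M="P_pi P q" and gamma=gamma and D="\<lambda>u. ?W u - ?V u"])
       (rule P_pi_nonneg[OF K qpol], rule P_pi_sum[OF K qpol], rule g0, rule g1, rule e0, rule Dineq)
  moreover have "?W s \<le> ?V s" using opt qpol unfolding is_opt_reg_policy_def by blast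
  ultimately show False using e_s neg by simp
qed

lemma vdiff_aux:
  fixes Q1 Q2 w1 w2 :: "'a::finite \<Rightarrow> real"
  assumes w0: "\<And>a. 0 \<le> w1 a" and w1: "(\<Sum>a\<in>UNIV. w1 a) = 1"
    and V1: "V1 = (\<Sum>a\<in>UNIV. w1 a * (Q1 a - tau * ln (w1 a)))"
    and V2: "(\<Sum>a\<in>UNIV. w1 a * (Q2 a - tau * ln (w1 a))) \<le> V2"
    and d: "\<And>a. \<bar>Q1 a - Q2 a\<bar> \<le> d"
  shows "V1 - V2 \<le> d"
proof -
  have "V1 - (\<Sum>a\<in>UNIV. w1 a * (Q2 a - tau * ln (w1 a))) = (\<Sum>a\<in>UNIV. w1 a * (Q1 a - Q2 a))"
    unfolding V1 sum_subtractf[symmetric] by (rule sum.cong) (auto simp: right_diff_distrib)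
  also have "\<dots> \<le> (\<Sum>a\<in>UNIV. w1 a * d)"
  proof (rule sum_mono)
    fix a show "w1 a * (Q1 a - Q2 a) \<le> w1 a * d"
      using d[of a] by (intro mult_left_mono w0) auto
  qed
  also have "\<dots> = d" by (simp add: sum_distrib_right[symmetric] w1)
  finally show ?thesis using V2 by linarith
qed

lemma r_le_rmax: "r i s a \<le> r_max r i"
  unfolding r_max_def by (rule Max_ge) (auto intro: image_eqI[where x="(s,a)"])

lemma rbound:
  assumes pos: "\<And>i s a. i \<le> m \<Longrightarrow> 0 < r i s a"
  shows "\<bar>r_lam m r lam s a - r_lam m r lam' s a\<bar> \<le> R_max m r * lam_dist2 m lam lam'"
proof -
  have "r_lam m r lam s a - r_lam m r lam' s a = (\<Sum>i=1..m. (lam i - lam' i) * r i s a)"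
    unfolding r_lam_def left_diff_distrib sum_subtractf by simp
  then have "\<bar>r_lam m r lam s a - r_lam m r lam' s a\<bar> \<le> (\<Sum>i=1..m. \<bar>(lam i - lam' i) * r i s a\<bar>)"
    by (simp add: sum_abs)
  also have "\<dots> \<le> (\<Sum>i=1..m. \<bar>lam i - lam' i\<bar> * \<bar>r_max r i\<bar>)"
  proof (rule sum_mono)
    fix i assume "i \<in> {1..m}"
    then have "0 < r i s a" using pos by auto
    then have "\<bar>r i s a\<bar> \<le> \<bar>r_max r i\<bar>" using r_le_rmax[of r i s a] by simp
    then show "\<bar>(lam i - lam' i) * r i s a\<bar> \<le> \<bar>lam i - lam' i\<bar> * \<bar>r_max r i\<bar>"
      by (simp add: abs_mult mult_left_mono)
  qed
  also have "\<dots> \<le> L2_set (\<lambda>i. lam i - lam' i) {1..m} * L2_set (r_max r) {1..m}"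
    by (rule L2_set_mult_ineq)
  also have "\<dots> = R_max m r * lam_dist2 m lam lam'"
    unfolding L2_set_def R_max_def lam_dist2_def by simp
  finally show ?thesis .
qed

theorem lemma5:
  fixes P :: "'s::finite \<Rightarrow> 'a::finite \<Rightarrow> 's \<Rightarrow> real"
    and r :: "nat \<Rightarrow> 's \<Rightarrow> 'a \<Rightarrow> real"
    and m :: nat and gamma tau :: real
    and lam lam' :: "nat \<Rightarrow> real"
    and pi1 pi2 :: "'s \<Rightarrow> 'a \<Rightarrow> real"
  assumes "is_kernel P"
    and "0 < gamma" and "gamma < 1"
    and "\<And>i s a. i \<le> m \<Longrightarrow> 0 < r i s a"
    and "0 < tau"
    and "\<And>i. i \<in> {1..m} \<Longrightarrow> 0 \<le> lam i"
    and "\<And>i. i \<in> {1..m} \<Longrightarrow> 0 \<le> lam' i"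
    and "is_opt_reg_policy P gamma m r tau lam pi1"
    and "is_opt_reg_policy P gamma m r tau lam' pi2"
  shows "Max (range (\<lambda>s. \<Sum>a\<in>UNIV. \<bar>pi1 s a - pi2 s a\<bar>))
           \<le> R_max m r / ((1 - gamma) * tau) * lam_dist2 m lam lam'"
proof -
  note K = assms(1) and g0 = less_imp_le[OF assms(2)] and g1 = assms(3) and tau = assms(5)
  note opt1 = assms(8) and opt2 = assms(9)
  have pol1: "is_policy pi1" using opt1 unfolding is_opt_reg_policy_def by simp
  have pol2: "is_policy pi2" using opt2 unfolding is_opt_reg_policy_def by simp
  define V1 where "V1 = V_reg P gamma m r tau lam pi1"
  define V2 where "V2 = V_reg P gamma m r tau lam' pi2"
  define Q1 where "Q1 s a = r_lam m r lam s a + gamma * (\<Sum>u\<in>UNIV. P s a u * V1 u)" for s a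
  define Q2 where "Q2 s a = r_lam m r lam' s a + gamma * (\<Sum>u\<in>UNIV. P s a u * V2 u)" for s a
  define F where "F Q w = (\<Sum>a\<in>UNIV. w a * (Q a - tau * ln (w a)))" for Q w :: "'a \<Rightarrow> real"
  have os1: "F (Q1 s) w \<le> F (Q1 s) (pi1 s)" if "\<And>a. 0 \<le> w a" "(\<Sum>a\<in>UNIV. w a) = 1" for s w
    unfolding F_def Q1_def V1_def by (rule onestep[OF K g0 g1 opt1 that])
  have os2: "F (Q2 s) w \<le> F (Q2 s) (pi2 s)" if "\<And>a. 0 \<le> w a" "(\<Sum>a\<in>UNIV. w a) = 1" for s w
    unfolding F_def Q2_def V2_def by (rule onestep[OF K g0 g1 opt2 that])
  have p10: "\<And>a. 0 \<le> pi1 s a" and p11: "(\<Sum>a\<in>UNIV. pi1 s a) = 1" for s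
    using pol1 unfolding is_policy_def by auto
  have p20: "\<And>a. 0 \<le> pi2 s a" and p21: "(\<Sum>a\<in>UNIV. pi2 s a) = 1" for s
    using pol2 unfolding is_policy_def by auto
  have sm1: "pi1 s a = sm (\<lambda>b. Q1 s b / tau) a" for s a
    by (rule gibbs[OF tau p10 p11]) (rule os1[unfolded F_def])
  have sm2: "pi2 s a = sm (\<lambda>b. Q2 s b / tau) a" for s a
    by (rule gibbs[OF tau p20 p21]) (rule os2[unfolded F_def])
  have B1: "V1 s = F (Q1 s) (pi1 s)" for s
    using bellman[OF K pol1 g0 g1, of m r tau lam s] unfolding Tq_eq F_def Q1_def V1_def .
  have B2: "V2 s = F (Q2 s) (pi2 s)" for s
    using bellman[OF K pol2 g0 g1, of m r tau lam' s] unfolding Tq_eq F_def Q2_def V2_def .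
  define Dm where "Dm = Max (range (\<lambda>(s, a). \<bar>Q1 s a - Q2 s a\<bar>))"
  have Dle: "\<bar>Q1 s a - Q2 s a\<bar> \<le> Dm" for s a
    unfolding Dm_def by (rule Max_ge) (auto intro: image_eqI[where x="(s,a)"])
  have Vd: "\<bar>V1 s - V2 s\<bar> \<le> Dm" for s
  proof -
    have o2: "F (Q2 s) (pi1 s) \<le> V2 s" using os2[OF p10 p11, of s s] B2[of s] by simp
    have o1: "F (Q1 s) (pi2 s) \<le> V1 s" using os1[OF p20 p21, of s s] B1[of s] by simp
    have "V1 s - V2 s \<le> Dm"
      by (rule vdiff_aux[OF p10 p11 B1[unfolded F_def] o2[unfolded F_def]]) (rule Dle)
    moreover have "V2 s - V1 s \<le> Dm"
      by (rule vdiff_aux[OF p20 p21 B2[unfolded F_def] o1[unfolded F_def]])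
         (simp add: abs_minus_commute Dle)
    ultimately show ?thesis by linarith
  qed
  define Rd where "Rd = R_max m r * lam_dist2 m lam lam'"
  have Qd: "\<bar>Q1 s a - Q2 s a\<bar> \<le> Rd + gamma * Dm" for s a
  proof -
    have "\<bar>(\<Sum>u\<in>UNIV. P s a u * V1 u) - (\<Sum>u\<in>UNIV. P s a u * V2 u)\<bar> = \<bar>\<Sum>u\<in>UNIV. P s a u * (V1 u - V2 u)\<bar>"
      by (simp add: sum_subtractf right_diff_distrib)
    also have "\<dots> \<le> (\<Sum>u\<in>UNIV. \<bar>P s a u * (V1 u - V2 u)\<bar>)" by (rule sum_abs)
    also have "\<dots> \<le> (\<Sum>u\<in>UNIV. P s a u * Dm)"
    proof (rule sum_mono)
      fix u have "0 \<le> P s a u" using K unfolding is_kernel_def by simp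
      then show "\<bar>P s a u * (V1 u - V2 u)\<bar> \<le> P s a u * Dm" using Vd[of u]
        by (simp add: abs_mult mult_left_mono)
    qed
    also have "\<dots> = Dm" using K unfolding is_kernel_def by (simp add: sum_distrib_right[symmetric])
    finally have A: "\<bar>(\<Sum>u\<in>UNIV. P s a u * V1 u) - (\<Sum>u\<in>UNIV. P s a u * V2 u)\<bar> \<le> Dm" .
    have R: "\<bar>r_lam m r lam s a - r_lam m r lam' s a\<bar> \<le> Rd" unfolding Rd_def by (rule rbound) (rule assms(4))
    have "Q1 s a - Q2 s a = (r_lam m r lam s a - r_lam m r lam' s a)
        + gamma * ((\<Sum>u\<in>UNIV. P s a u * V1 u) - (\<Sum>u\<in>UNIV. P s a u * V2 u))"
      unfolding Q1_def Q2_def by (simp add: right_diff_distrib)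
    then have "\<bar>Q1 s a - Q2 s a\<bar> \<le> \<bar>r_lam m r lam s a - r_lam m r lam' s a\<bar>
        + gamma * \<bar>(\<Sum>u\<in>UNIV. P s a u * V1 u) - (\<Sum>u\<in>UNIV. P s a u * V2 u)\<bar>"
      using g0 by (simp add: abs_mult abs_triangle_ineq[THEN order_trans])
    also have "\<dots> \<le> Rd + gamma * Dm" using R A g0 by (simp add: add_mono mult_left_mono)
    finally show ?thesis .
  qed
  have "\<forall>x\<in>range (\<lambda>(s, a). \<bar>Q1 s a - Q2 s a\<bar>). x \<le> Rd + gamma * Dm" using Qd by auto
  then have "Max (range (\<lambda>(s, a). \<bar>Q1 s a - Q2 s a\<bar>)) \<le> Rd + gamma * Dm" by (simp add: Max_le_iff)
  then have "Dm \<le> Rd + gamma * Dm" by (simp only: Dm_def[symmetric])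
  then have "(1 - gamma) * Dm \<le> Rd" by (simp add: algebra_simps)
  then have DmR: "Dm \<le> Rd / (1 - gamma)" using g1 by (simp add: field_simps)
  have "(\<Sum>a\<in>UNIV. \<bar>pi1 s a - pi2 s a\<bar>) \<le> Dm / tau" for s
    unfolding sm1 sm2
  proof (rule sm_lip)
    fix a
    have "\<bar>Q1 s a / tau - Q2 s a / tau\<bar> = \<bar>Q1 s a - Q2 s a\<bar> / tau" using tau by (simp add: diff_divide_distrib[symmetric])
    then show "\<bar>Q1 s a / tau - Q2 s a / tau\<bar> \<le> Dm / tau" using Dle[of s a] tau by (simp add: divide_right_mono)
  qed
  then have "Max (range (\<lambda>s. \<Sum>a\<in>UNIV. \<bar>pi1 s a - pi2 s a\<bar>)) \<le> Dm / tau"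
    by (subst Max_le_iff) auto
  also have "\<dots> \<le> Rd / (1 - gamma) / tau" by (rule divide_right_mono[OF DmR]) (simp add: less_imp_le[OF tau])
  also have "\<dots> = R_max m r / ((1 - gamma) * tau) * lam_dist2 m lam lam'"
    unfolding Rd_def by simp
  finally show ?thesis .
qed

end
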